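(* Let $i\colon\mathcal{A}\to\mathcal{B}$ be an injective closed homomorphism of complete topological rings and let $S$ be a multiplicatively closed subset of $\mathcal{A}$. Then $\widehat{S^{-1}i}\colon\widehat{S^{-1}\mathcal{A}}\to\widehat{i(S)^{-1}\mathcal{B}}$ is an injective homomorphism of topological rings.
   Context: Topological rings are linearly topologized with a countable fundamental system of open ideals; homomorphisms are continuous; complete means the canonical map to $\varprojlim_{\mathfrak{a}}\mathcal{A}/\mathfrak{a}$ (open ideals, discrete quotients) is a topological isomorphism. A multiplicatively closed subset contains $1$ and is stable under multiplication. The separated completed localization $\widehat{S^{-1}\mathcal{A}}$ is the separated completion of $S^{-1}\mathcal{A}$ for the linear topology with fundamental system of ideals $S^{-1}\mathfrak{a}$, $\mathfrak{a}$ open in $\mathcal{A}$, with canonical map $\tilde j_{\mathcal{A}}\colon\mathcal{A}\to\widehat{S^{-1}\mathcal{A}}$ (similarly $\tilde j_{\mathcal{B}}\colon\mathcal{B}\to\widehat{i(S)^{-1}\mathcal{B}}$). $\widehat{S^{-1}i}$ is the unique continuous ring homomorphism with $\widehat{S^{-1}i}\circ\tilde j_{\mathcal{A}}=\tilde j_{\mathcal{B}}\circ i$. *)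

theory Defs
  imports "HOL-Analysis.Analysis"
begin

definition is_ideal :: "'a::comm_ring_1 set \<Rightarrow> bool" where
  "is_ideal I \<longleftrightarrow> 0 \<in> I \<and> (\<forall>x\<in>I. \<forall>y\<in>I. x + y \<in> I) \<and> (\<forall>r. \<forall>x\<in>I. r * x \<in> I)"

definition lin_top :: "'a::comm_ring_1 topology \<Rightarrow> bool" where
  "lin_top T \<longleftrightarrow> topspace T = UNIV \<and>
     (\<exists>F. countable F \<and> F \<noteq> {} \<and> (\<forall>a\<in>F. is_ideal a) \<and>
          (\<forall>a\<in>F. \<forall>b\<in>F. \<exists>c\<in>F. c \<subseteq> a \<inter> b) \<and>
          (\<forall>U. openin T U \<longleftrightarrow> (\<forall>x\<in>U. \<exists>a\<in>F. (\<lambda>y. x + y) ` a \<subseteq> U)))"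

definition open_ideals :: "'a::comm_ring_1 topology \<Rightarrow> 'a set set" where
  "open_ideals T = {a. is_ideal a \<and> openin T a}"

definition ring_hom_fun :: "('a::comm_ring_1 \<Rightarrow> 'b::comm_ring_1) \<Rightarrow> bool" where
  "ring_hom_fun f \<longleftrightarrow> (\<forall>x y. f (x + y) = f x + f y) \<and> (\<forall>x y. f (x * y) = f x * f y) \<and> f 1 = 1"

definition mult_closed :: "'a::comm_ring_1 set \<Rightarrow> bool" where
  "mult_closed S \<longleftrightarrow> 1 \<in> S \<and> (\<forall>x\<in>S. \<forall>y\<in>S. x * y \<in> S)"

definition qrel :: "'a::comm_ring_1 set \<Rightarrow> ('a \<times> 'a) set" where
  "qrel a = {(x, y). x - y \<in> a}"

definition inv_lim :: "'a::comm_ring_1 topology \<Rightarrow> ('a set \<Rightarrow> 'a set) set" where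
  "inv_lim T = {F \<in> PiE (open_ideals T) (\<lambda>a. UNIV // qrel a).
      \<forall>a\<in>open_ideals T. \<forall>b\<in>open_ideals T. a \<subseteq> b \<longrightarrow> F a \<subseteq> F b}"

definition inv_lim_top :: "'a::comm_ring_1 topology \<Rightarrow> ('a set \<Rightarrow> 'a set) topology" where
  "inv_lim_top T = subtopology
      (product_topology (\<lambda>a. discrete_topology (UNIV // qrel a)) (open_ideals T)) (inv_lim T)"

definition canon :: "'a::comm_ring_1 topology \<Rightarrow> 'a \<Rightarrow> ('a set \<Rightarrow> 'a set)" where
  "canon T x = restrict (\<lambda>a. qrel a `` {x}) (open_ideals T)"

definition complete_ring :: "'a::comm_ring_1 topology \<Rightarrow> bool" where
  "complete_ring T \<longleftrightarrow> homeomorphic_map T (inv_lim_top T) (canon T)"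

text \<open>Pairs (x,s), s in S, stand for x/s.  Two fractions are congruent modulo S^{-1}a iff
  their difference lies in S^{-1}a, i.e. some u in S has u(xt - ys) in a.\<close>
definition loc_rel :: "'a::comm_ring_1 set \<Rightarrow> 'a set \<Rightarrow> (('a \<times> 'a) \<times> ('a \<times> 'a)) set" where
  "loc_rel S a = {((x, s), (y, t)). s \<in> S \<and> t \<in> S \<and> (\<exists>u\<in>S. u * (x * t - y * s) \<in> a)}"

definition loc_quot :: "'a::comm_ring_1 set \<Rightarrow> 'a set \<Rightarrow> ('a \<times> 'a) set set" where
  "loc_quot S a = (UNIV \<times> S) // loc_rel S a"

definition cloc_carrier :: "'a::comm_ring_1 topology \<Rightarrow> 'a set \<Rightarrow> ('a set \<Rightarrow> ('a \<times> 'a) set) set" where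
  "cloc_carrier T S = {F \<in> PiE (open_ideals T) (loc_quot S).
      \<forall>a\<in>open_ideals T. \<forall>b\<in>open_ideals T. a \<subseteq> b \<longrightarrow> F a \<subseteq> F b}"

definition cloc_top :: "'a::comm_ring_1 topology \<Rightarrow> 'a set \<Rightarrow> ('a set \<Rightarrow> ('a \<times> 'a) set) topology" where
  "cloc_top T S = subtopology
      (product_topology (\<lambda>a. discrete_topology (loc_quot S a)) (open_ideals T)) (cloc_carrier T S)"

definition cloc_j :: "'a::comm_ring_1 topology \<Rightarrow> 'a set \<Rightarrow> 'a \<Rightarrow> ('a set \<Rightarrow> ('a \<times> 'a) set)" where
  "cloc_j T S x = restrict (\<lambda>a. loc_rel S a `` {(x, 1)}) (open_ideals T)"

definition loc_add :: "'a::comm_ring_1 set \<Rightarrow> 'a set \<Rightarrow> ('a \<times> 'a) set \<Rightarrow> ('a \<times> 'a) set \<Rightarrow> ('a \<times> 'a) set" where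
  "loc_add S a C D = (let (x, s) = (SOME p. p \<in> C); (y, t) = (SOME q. q \<in> D)
                      in loc_rel S a `` {(x * t + y * s, s * t)})"

definition loc_mult :: "'a::comm_ring_1 set \<Rightarrow> 'a set \<Rightarrow> ('a \<times> 'a) set \<Rightarrow> ('a \<times> 'a) set \<Rightarrow> ('a \<times> 'a) set" where
  "loc_mult S a C D = (let (x, s) = (SOME p. p \<in> C); (y, t) = (SOME q. q \<in> D)
                      in loc_rel S a `` {(x * y, s * t)})"

definition cloc_add :: "'a::comm_ring_1 topology \<Rightarrow> 'a set \<Rightarrow> ('a set \<Rightarrow> ('a \<times> 'a) set) \<Rightarrow> ('a set \<Rightarrow> ('a \<times> 'a) set) \<Rightarrow> ('a set \<Rightarrow> ('a \<times> 'a) set)" where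
  "cloc_add T S F G = restrict (\<lambda>a. loc_add S a (F a) (G a)) (open_ideals T)"

definition cloc_mult :: "'a::comm_ring_1 topology \<Rightarrow> 'a set \<Rightarrow> ('a set \<Rightarrow> ('a \<times> 'a) set) \<Rightarrow> ('a set \<Rightarrow> ('a \<times> 'a) set) \<Rightarrow> ('a set \<Rightarrow> ('a \<times> 'a) set)" where
  "cloc_mult T S F G = restrict (\<lambda>a. loc_mult S a (F a) (G a)) (open_ideals T)"

definition cloc_one :: "'a::comm_ring_1 topology \<Rightarrow> 'a set \<Rightarrow> ('a set \<Rightarrow> ('a \<times> 'a) set)" where
  "cloc_one T S = cloc_j T S 1"

definition cloc_ring_hom ::
  "'a::comm_ring_1 topology \<Rightarrow> 'a set \<Rightarrow> 'b::comm_ring_1 topology \<Rightarrow> 'b set \<Rightarrow>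
   (('a set \<Rightarrow> ('a \<times> 'a) set) \<Rightarrow> ('b set \<Rightarrow> ('b \<times> 'b) set)) \<Rightarrow> bool" where
  "cloc_ring_hom TA S TB S' f \<longleftrightarrow>
     f ` cloc_carrier TA S \<subseteq> cloc_carrier TB S' \<and>
     (\<forall>F\<in>cloc_carrier TA S. \<forall>G\<in>cloc_carrier TA S.
        f (cloc_add TA S F G) = cloc_add TB S' (f F) (f G) \<and>
        f (cloc_mult TA S F G) = cloc_mult TB S' (f F) (f G)) \<and>
     f (cloc_one TA S) = cloc_one TB S'"

end

theory Submission
  imports Defs
begin


lemma open_ideal_ideal: "a \<in> open_ideals T \<Longrightarrow> is_ideal a"
  by (simp add: open_ideals_def)

lemma ideal_mult: "is_ideal a \<Longrightarrow> x \<in> a \<Longrightarrow> r * x \<in> a"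
  by (simp add: is_ideal_def)

lemma ideal_add: "is_ideal a \<Longrightarrow> x \<in> a \<Longrightarrow> y \<in> a \<Longrightarrow> x + y \<in> a"
  by (simp add: is_ideal_def)

lemma ideal_0: "is_ideal a \<Longrightarrow> 0 \<in> a"
  by (simp add: is_ideal_def)

lemma loc_rel_iff: "((x,s),(y,t)) \<in> loc_rel S a \<longleftrightarrow> s \<in> S \<and> t \<in> S \<and> (\<exists>u\<in>S. u * (x * t - y * s) \<in> a)"
  by (simp add: loc_rel_def)

lemma loc_rel_equiv:
  assumes a: "is_ideal a" and S: "mult_closed S"
  shows "equiv (UNIV \<times> S) (loc_rel S a)"
proof (rule equivI)
  show "loc_rel S a \<subseteq> (UNIV \<times> S) \<times> (UNIV \<times> S)" by (auto simp: loc_rel_def)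
next
  show "refl_on (UNIV \<times> S) (loc_rel S a)"
    unfolding refl_on_def
  proof (intro ballI)
    fix p assume "p \<in> (UNIV::'a set) \<times> S"
    then obtain x s where p: "p = (x,s)" "s \<in> S" by auto
    have "1 * (x * s - x * s) \<in> a" using ideal_0[OF a] by simp
    then show "(p,p) \<in> loc_rel S a" using p S by (auto simp: loc_rel_iff mult_closed_def)
  qed
next
  show "sym (loc_rel S a)"
    unfolding sym_def
  proof (clarify)
    fix x s y t assume "((x,s),(y,t)) \<in> loc_rel S a"
    then obtain u where u: "s \<in> S" "t \<in> S" "u \<in> S" "u * (x * t - y * s) \<in> a" by (auto simp: loc_rel_iff)
    have "(-1) * (u * (x * t - y * s)) \<in> a" using ideal_mult[OF a u(4)] .
    moreover have "(-1) * (u * (x * t - y * s)) = u * (y * s - x * t)" by (simp add: algebra_simps)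
    ultimately show "((y,t),(x,s)) \<in> loc_rel S a" using u by (auto simp: loc_rel_iff)
  qed
next
  show "trans (loc_rel S a)"
    unfolding trans_def
  proof (clarify)
    fix x s y t z r assume "((x,s),(y,t)) \<in> loc_rel S a" "((y,t),(z,r)) \<in> loc_rel S a"
    then obtain u v where u: "s \<in> S" "t \<in> S" "r \<in> S" "u \<in> S" "v \<in> S"
       "u * (x * t - y * s) \<in> a" "v * (y * r - z * t) \<in> a" by (auto simp: loc_rel_iff)
    have "(v * r) * (u * (x * t - y * s)) + (u * s) * (v * (y * r - z * t)) \<in> a"
      using ideal_add[OF a ideal_mult[OF a u(6)] ideal_mult[OF a u(7)]] .
    moreover have "(v * r) * (u * (x * t - y * s)) + (u * s) * (v * (y * r - z * t)) = (u * v * t) * (x * r - z * s)"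
      by (simp add: algebra_simps)
    moreover have "u * v * t \<in> S" using S u by (simp add: mult_closed_def)
    ultimately show "((x,s),(z,r)) \<in> loc_rel S a" using u by (auto simp: loc_rel_iff)
  qed
qed

lemma loc_rel_mult:
  assumes a: "is_ideal a" and S: "mult_closed S"
    and "((x,s),(x',s')) \<in> loc_rel S a" "((y,t),(y',t')) \<in> loc_rel S a"
  shows "((x * y,s * t),(x' * y',s' * t')) \<in> loc_rel S a"
proof -
  obtain u v where u: "s \<in> S" "t \<in> S" "s' \<in> S" "t' \<in> S" "u \<in> S" "v \<in> S"
       "u * (x * s' - x' * s) \<in> a" "v * (y * t' - y' * t) \<in> a" using assms(3,4) by (auto simp: loc_rel_iff)
  have "(v * y * t') * (u * (x * s' - x' * s)) + (u * x' * s) * (v * (y * t' - y' * t)) \<in> a"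
    using ideal_add[OF a ideal_mult[OF a u(7)] ideal_mult[OF a u(8)]] .
  moreover have "(v * y * t') * (u * (x * s' - x' * s)) + (u * x' * s) * (v * (y * t' - y' * t))
     = (u * v) * (x * y*(s' * t') - x' * y' * (s * t))" by (simp add: algebra_simps)
  ultimately show ?thesis using u S by (auto simp: loc_rel_iff mult_closed_def)
qed

lemma loc_mult_class:
  assumes a: "is_ideal a" and S: "mult_closed S" and st: "s \<in> S" "t \<in> S"
  shows "loc_mult S a (loc_rel S a `` {(x,s)}) (loc_rel S a `` {(y,t)}) = loc_rel S a `` {(x * y, s * t)}"
proof -
  have E: "equiv (UNIV \<times> S) (loc_rel S a)" by (rule loc_rel_equiv[OF a S])
  let ?C = "loc_rel S a `` {(x,s)}" and ?D = "loc_rel S a `` {(y,t)}"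
  have "(x,s) \<in> ?C" "(y,t) \<in> ?D" using equiv_class_self[OF E] st by auto
  then have "(SOME p. p \<in> ?C) \<in> ?C" "(SOME p. p \<in> ?D) \<in> ?D" by (metis someI)+
  moreover obtain x' s' where 1: "(SOME p. p \<in> ?C) = (x',s')" by fastforce
  moreover obtain y' t' where 2: "(SOME p. p \<in> ?D) = (y',t')" by fastforce
  ultimately have r: "((x,s),(x',s')) \<in> loc_rel S a" "((y,t),(y',t')) \<in> loc_rel S a" by auto
  have "loc_mult S a ?C ?D = loc_rel S a `` {(x' * y', s' * t')}"
    unfolding loc_mult_def 1 2 by simp
  also have "\<dots> = loc_rel S a `` {(x * y, s * t)}"
    using equiv_class_eq[OF E loc_rel_mult[OF a S r]] by simp
  finally show ?thesis .
qed



definition qc :: "'a::comm_ring_1 topology \<Rightarrow> 'a set \<Rightarrow> 'a \<Rightarrow> 'a \<Rightarrow> ('a set \<Rightarrow> ('a \<times> 'a) set)" where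
  "qc T S x s = restrict (\<lambda>a. loc_rel S a `` {(x,s)}) (open_ideals T)"

lemma loc_rel_mono: "a \<subseteq> b \<Longrightarrow> loc_rel S a \<subseteq> loc_rel S b"
  by (auto simp: loc_rel_def)

lemma qc_carrier: "s \<in> S \<Longrightarrow> qc T S x s \<in> cloc_carrier T S"
  unfolding cloc_carrier_def qc_def loc_quot_def
  using loc_rel_mono by (auto intro!: quotientI)

lemma cloc_j_qc: "cloc_j T S x = qc T S x 1"
  by (simp add: cloc_j_def qc_def)

lemma carrier_class:
  assumes "F \<in> cloc_carrier T S" "a \<in> open_ideals T"
  obtains x s where "s \<in> S" "F a = loc_rel S a `` {(x,s)}"
proof -
  have "F a \<in> loc_quot S a" using assms by (auto simp: cloc_carrier_def)
  then show ?thesis using that unfolding loc_quot_def by (auto elim!: quotientE)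
qed

lemma carrier_mono_class:
  assumes S: "mult_closed S" and F: "F \<in> cloc_carrier T S" and a0: "a0 \<in> open_ideals T"
    and a': "a' \<in> open_ideals T" and sub: "a0 \<subseteq> a'" and s: "s \<in> S"
    and eq: "F a0 = loc_rel S a0 `` {(x,s)}"
  shows "F a' = loc_rel S a' `` {(x,s)}"
proof -
  have E0: "equiv (UNIV \<times> S) (loc_rel S a0)" using loc_rel_equiv[OF open_ideal_ideal[OF a0] S] .
  have E: "equiv (UNIV \<times> S) (loc_rel S a')" using loc_rel_equiv[OF open_ideal_ideal[OF a'] S] .
  have "(x,s) \<in> F a0" using eq equiv_class_self[OF E0] s by auto
  also have "F a0 \<subseteq> F a'" using F a0 a' sub by (auto simp: cloc_carrier_def)
  finally have xs: "(x,s) \<in> F a'" .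
  obtain y t where t: "t \<in> S" "F a' = loc_rel S a' `` {(y,t)}" using carrier_class[OF F a'] .
  have "((y,t),(x,s)) \<in> loc_rel S a'" using xs t by auto
  from equiv_class_eq[OF E this] t show ?thesis by simp
qed

lemma mult_closed_image:
  assumes "ring_hom_fun i" "mult_closed S"
  shows "mult_closed (i ` S)"
  using assms unfolding mult_closed_def ring_hom_fun_def
  by (metis image_eqI imageE)

lemma f_qc:
  fixes TA :: "'a::comm_ring_1 topology" and TB :: "'b::comm_ring_1 topology"
  assumes hi: "ring_hom_fun i" and S: "mult_closed S"
    and hf: "cloc_ring_hom TA S TB (i ` S) f"
    and fj: "\<And>x. f (cloc_j TA S x) = cloc_j TB (i ` S) (i x)"
    and s: "s \<in> S" and b: "b \<in> open_ideals TB"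
  shows "f (qc TA S x s) b = loc_rel (i ` S) b `` {(i x, i s)}"
proof -
  have S': "mult_closed (i ` S)" using mult_closed_image[OF hi S] .
  have S1: "1 \<in> S" using S by (simp add: mult_closed_def)
  have m: "cloc_mult TA S (qc TA S x s) (qc TA S s 1) = qc TA S x 1"
  proof
    fix a show "cloc_mult TA S (qc TA S x s) (qc TA S s 1) a = qc TA S x 1 a"
    proof (cases "a \<in> open_ideals TA")
      case True
      have I: "is_ideal a" using open_ideal_ideal[OF True] .
      have "loc_mult S a (loc_rel S a `` {(x,s)}) (loc_rel S a `` {(s,1)}) = loc_rel S a `` {(x * s, s * 1)}"
        using loc_mult_class[OF I S s S1] .
      also have "\<dots> = loc_rel S a `` {(x,1)}"
      proof (rule equiv_class_eq[OF loc_rel_equiv[OF I S]])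
        have "1 * (x * s * 1 - x * (s * 1)) \<in> a" using ideal_0[OF I] by simp
        then show "((x * s, s * 1), (x, 1)) \<in> loc_rel S a" using s S1 by (auto simp: loc_rel_iff)
      qed
      finally show ?thesis using True by (simp add: cloc_mult_def qc_def)
    next
      case False then show ?thesis by (simp add: cloc_mult_def qc_def)
    qed
  qed
  have c1: "qc TA S x s \<in> cloc_carrier TA S" "qc TA S s 1 \<in> cloc_carrier TA S"
    using qc_carrier s S1 by auto
  let ?H = "f (qc TA S x s)"
  have Hc: "?H \<in> cloc_carrier TB (i ` S)" using hf c1 by (auto simp: cloc_ring_hom_def)
  have "f (qc TA S x 1) = cloc_mult TB (i ` S) ?H (f (qc TA S s 1))"
    using hf c1 unfolding cloc_ring_hom_def m[symmetric] by blast
  also have "f (qc TA S s 1) = qc TB (i ` S) (i s) 1"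
    using fj[of s] by (simp add: cloc_j_qc hi[unfolded ring_hom_fun_def])
  finally have eq: "qc TB (i ` S) (i x) 1 = cloc_mult TB (i ` S) ?H (qc TB (i ` S) (i s) 1)"
    using fj[of x] by (simp add: cloc_j_qc)
  have Ib: "is_ideal b" using open_ideal_ideal[OF b] .
  have E: "equiv (UNIV \<times> i ` S) (loc_rel (i ` S) b)" using loc_rel_equiv[OF Ib S'] .
  have S1': "1 \<in> i ` S" using S' by (simp add: mult_closed_def)
  have is': "i s \<in> i ` S" using s by simp
  obtain z r where r: "r \<in> i ` S" "?H b = loc_rel (i ` S) b `` {(z,r)}"
    using carrier_class[OF Hc b] .
  have "loc_rel (i ` S) b `` {(i x, 1)} = loc_mult (i ` S) b (?H b) (loc_rel (i ` S) b `` {(i s, 1)})"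
    using fun_cong[OF eq, of b] b by (simp add: cloc_mult_def qc_def)
  also have "\<dots> = loc_rel (i ` S) b `` {(z * i s, r * 1)}"
    unfolding r(2) using loc_mult_class[OF Ib S' r(1) S1'] .
  finally have "((z * i s, r * 1), (i x, 1)) \<in> loc_rel (i ` S) b"
    by (rule eq_equiv_class[OF sym E]) (use S1' in auto)
  then obtain v where v: "v \<in> i ` S" "v * (z * i s * 1 - i x * (r * 1)) \<in> b"
    by (auto simp: loc_rel_iff)
  have "((z, r), (i x, i s)) \<in> loc_rel (i ` S) b"
    using v r(1) is' by (auto simp: loc_rel_iff)
  from equiv_class_eq[OF E this] r(2) show ?thesis by simp
qed



lemma topspace_cloc: "topspace (cloc_top T S) = cloc_carrier T S"
  unfolding cloc_top_def cloc_carrier_def by auto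

lemma cont_local:
  assumes fc: "continuous_map (cloc_top TA S) (cloc_top TB S') f"
    and F: "F \<in> cloc_carrier TA S" and b: "b \<in> open_ideals TB"
  shows "\<exists>J. finite J \<and> J \<subseteq> open_ideals TA \<and>
           (\<forall>H\<in>cloc_carrier TA S. (\<forall>a\<in>J. H a = F a) \<longrightarrow> f H b = f F b)"
proof -
  have g: "continuous_map (cloc_top TB S') (discrete_topology (loc_quot S' b)) (\<lambda>H. H b)"
    unfolding cloc_top_def
    by (rule continuous_map_from_subtopology[OF continuous_map_product_projection[OF b]])
  have gf: "continuous_map (cloc_top TA S) (discrete_topology (loc_quot S' b)) (\<lambda>H. f H b)"
    using continuous_map_compose[OF fc g] by (simp add: o_def)
  have "f F \<in> topspace (cloc_top TB S')" using fc F
    by (auto simp: continuous_map_def topspace_cloc)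
  then have fFb: "f F b \<in> loc_quot S' b" using b by (auto simp: topspace_cloc cloc_carrier_def)
  have "openin (cloc_top TA S) {H \<in> topspace (cloc_top TA S). f H b \<in> {f F b}}"
    by (rule openin_continuous_map_preimage[OF gf]) (use fFb in auto)
  then have "openin (cloc_top TA S) {H \<in> cloc_carrier TA S. f H b = f F b}"
    by (simp add: topspace_cloc)
  then obtain U where U: "openin (product_topology (\<lambda>a. discrete_topology (loc_quot S a)) (open_ideals TA)) U"
      "{H \<in> cloc_carrier TA S. f H b = f F b} = U \<inter> cloc_carrier TA S"
    unfolding cloc_top_def openin_subtopology by blast
  have "F \<in> U" using U(2) F by blast
  then obtain W where W: "finite {a \<in> open_ideals TA. W a \<noteq> loc_quot S a}"
     "F \<in> PiE (open_ideals TA) W" "PiE (open_ideals TA) W \<subseteq> U"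
    using U(1) unfolding openin_product_topology_alt by auto
  show ?thesis
  proof (intro exI conjI ballI impI)
    show "finite {a \<in> open_ideals TA. W a \<noteq> loc_quot S a}" by (rule W(1))
    show "{a \<in> open_ideals TA. W a \<noteq> loc_quot S a} \<subseteq> open_ideals TA" by auto
    fix H assume H: "H \<in> cloc_carrier TA S" and ag: "\<forall>a\<in>{a \<in> open_ideals TA. W a \<noteq> loc_quot S a}. H a = F a"
    have "H \<in> PiE (open_ideals TA) W"
    proof (rule PiE_I)
      fix a assume a: "a \<in> open_ideals TA"
      show "H a \<in> W a"
      proof (cases "W a = loc_quot S a")
        case True then show ?thesis using H a by (auto simp: cloc_carrier_def)
      next
        case False then show ?thesis using ag a W(2) by auto
      qed
    next
      fix a assume "a \<notin> open_ideals TA" then show "H a = undefined"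
        using H by (auto simp: cloc_carrier_def)
    qed
    then have "H \<in> U \<inter> cloc_carrier TA S" using W(3) H by blast
    then show "f H b = f F b" using U(2) by blast
  qed
qed

lemma embed:
  fixes TA :: "'a::comm_ring_1 topology" and TB :: "'b::comm_ring_1 topology"
  assumes lA: "lin_top TA" and lB: "lin_top TB" and hi: "ring_hom_fun i"
    and inj: "inj i" and cm: "closed_map TA TB i" and a: "a \<in> open_ideals TA"
  shows "\<exists>b\<in>open_ideals TB. \<forall>x. i x \<in> b \<longrightarrow> x \<in> a"
proof -
  have tA: "topspace TA = UNIV" and tB: "topspace TB = UNIV" using lA lB by (auto simp: lin_top_def)
  have "openin TA a" using a by (simp add: open_ideals_def)
  then have "closedin TA (UNIV - a)" by (simp add: closedin_def tA Diff_Diff_Int)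
  then have "closedin TB (i ` (UNIV - a))" using cm by (simp add: closed_map_def)
  then have op: "openin TB (UNIV - i ` (UNIV - a))" by (simp add: closedin_def tB)
  have i0: "i 0 = 0" proof -
    have "i (0 + 0) = i 0 + i 0" using hi unfolding ring_hom_fun_def by blast
    then show ?thesis by simp
  qed
  have 0: "0 \<in> UNIV - i ` (UNIV - a)"
  proof
    show "0 \<notin> i ` (UNIV - a)"
    proof
      assume "0 \<in> i ` (UNIV - a)"
      then obtain y where "y \<notin> a" "i y = i 0" using i0 by auto
      then show False using inj ideal_0[OF open_ideal_ideal[OF a]] by (auto dest: injD)
    qed
  qed simp
  obtain Fam where Fam: "\<forall>c\<in>Fam. is_ideal c"
    "\<And>U. openin TB U \<longleftrightarrow> (\<forall>x\<in>U. \<exists>c\<in>Fam. (\<lambda>y. x + y) ` c \<subseteq> U)"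
    using lB unfolding lin_top_def by blast
  obtain c where c: "c \<in> Fam" "(\<lambda>y. 0 + y) ` c \<subseteq> UNIV - i ` (UNIV - a)"
    using Fam(2)[of "UNIV - i ` (UNIV - a)"] op 0 by blast
  have ic: "is_ideal c" using Fam(1) c(1) by blast
  have "openin TB c"
    unfolding Fam(2)
  proof
    fix x assume "x \<in> c"
    then have "(\<lambda>y. x + y) ` c \<subseteq> c" using ideal_add[OF ic] by auto
    then show "\<exists>c'\<in>Fam. (\<lambda>y. x + y) ` c' \<subseteq> c" using c(1) by blast
  qed
  then have "c \<in> open_ideals TB" using ic by (simp add: open_ideals_def)
  moreover have "\<forall>x. i x \<in> c \<longrightarrow> x \<in> a" using c(2) by auto
  ultimately show ?thesis by blast
qed



lemma ideal_Inter: "K \<noteq> {} \<Longrightarrow> \<forall>c\<in>K. is_ideal c \<Longrightarrow> is_ideal (\<Inter>K)"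
  unfolding is_ideal_def by auto

theorem lemma1p21:
  fixes TA :: "'a::comm_ring_1 topology" and TB :: "'b::comm_ring_1 topology"
    and i :: "'a \<Rightarrow> 'b" and S :: "'a set"
    and f :: "('a set \<Rightarrow> ('a \<times> 'a) set) \<Rightarrow> ('b set \<Rightarrow> ('b \<times> 'b) set)"
  assumes "lin_top TA" and "lin_top TB"
    and "complete_ring TA" and "complete_ring TB"
    and "ring_hom_fun i" and "continuous_map TA TB i"
    and "inj i" and "closed_map TA TB i"
    and "mult_closed S"
    and "cloc_ring_hom TA S TB (i ` S) f"
    and "continuous_map (cloc_top TA S) (cloc_top TB (i ` S)) f"
    and "\<And>x. f (cloc_j TA S x) = cloc_j TB (i ` S) (i x)"
  shows "inj_on f (cloc_carrier TA S)"
proof (rule inj_onI, rule ccontr)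
  note lA = assms(1) and lB = assms(2) and hi = assms(5) and inj = assms(7) and cm = assms(8)
    and S = assms(9) and hf = assms(10) and fc = assms(11) and fj = assms(12)
  fix F G assume F: "F \<in> cloc_carrier TA S" and G: "G \<in> cloc_carrier TA S"
    and fFG: "f F = f G" and ne: "F \<noteq> G"
  obtain a where a: "a \<in> open_ideals TA" "F a \<noteq> G a"
  proof -
    have "\<exists>a\<in>open_ideals TA. F a \<noteq> G a"
    proof (rule ccontr)
      assume "\<not> ?thesis"
      then have "F = G" using F G by (auto simp: cloc_carrier_def intro: PiE_ext)
      then show False using ne by simp
    qed
    then show ?thesis using that by blast
  qed
  obtain b where b: "b \<in> open_ideals TB" "\<forall>x. i x \<in> b \<longrightarrow> x \<in> a"
    using embed[OF lA lB hi inj cm a(1)] by blast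
  obtain J1 where J1: "finite J1" "J1 \<subseteq> open_ideals TA"
    "\<forall>H\<in>cloc_carrier TA S. (\<forall>a\<in>J1. H a = F a) \<longrightarrow> f H b = f F b"
    using cont_local[OF fc F b(1)] by blast
  obtain J2 where J2: "finite J2" "J2 \<subseteq> open_ideals TA"
    "\<forall>H\<in>cloc_carrier TA S. (\<forall>a\<in>J2. H a = G a) \<longrightarrow> f H b = f G b"
    using cont_local[OF fc G b(1)] by blast
  define K where "K = insert a (J1 \<union> J2)"
  define a0 where "a0 = \<Inter>K"
  have K: "finite K" "K \<noteq> {}" "K \<subseteq> open_ideals TA" using J1 J2 a(1) by (auto simp: K_def)
  have a0: "a0 \<in> open_ideals TA"
  proof -
    have "is_ideal a0" unfolding a0_def
      by (rule ideal_Inter) (use K in \<open>auto simp: open_ideals_def\<close>)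
    moreover have "openin TA a0" unfolding a0_def
      by (rule openin_Inter) (use K in \<open>auto simp: open_ideals_def\<close>)
    ultimately show ?thesis by (simp add: open_ideals_def)
  qed
  have sub: "\<And>c. c \<in> K \<Longrightarrow> a0 \<subseteq> c" by (auto simp: a0_def)
  obtain x s where s: "s \<in> S" "F a0 = loc_rel S a0 `` {(x,s)}" using carrier_class[OF F a0] .
  obtain y t where t: "t \<in> S" "G a0 = loc_rel S a0 `` {(y,t)}" using carrier_class[OF G a0] .
  have Fx: "\<And>c. c \<in> K \<Longrightarrow> F c = loc_rel S c `` {(x,s)}"
    using carrier_mono_class[OF S F a0 _ _ s] K(3) sub by blast
  have Gy: "\<And>c. c \<in> K \<Longrightarrow> G c = loc_rel S c `` {(y,t)}"
    using carrier_mono_class[OF S G a0 _ _ t] K(3) sub by blast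
  have "\<forall>c\<in>J1. qc TA S x s c = F c"
  proof
    fix c assume c: "c \<in> J1"
    then have "c \<in> K" "c \<in> open_ideals TA" using J1(2) by (auto simp: K_def)
    then show "qc TA S x s c = F c" using Fx[of c] by (simp add: qc_def)
  qed
  then have "f (qc TA S x s) b = f F b"
    using J1(3) qc_carrier[OF s(1)] by blast
  moreover have "\<forall>c\<in>J2. qc TA S y t c = G c"
  proof
    fix c assume c: "c \<in> J2"
    then have "c \<in> K" "c \<in> open_ideals TA" using J2(2) by (auto simp: K_def)
    then show "qc TA S y t c = G c" using Gy[of c] by (simp add: qc_def)
  qed
  then have "f (qc TA S y t) b = f G b"
    using J2(3) qc_carrier[OF t(1)] by blast
  ultimately have "loc_rel (i ` S) b `` {(i x, i s)} = loc_rel (i ` S) b `` {(i y, i t)}"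
    using f_qc[OF hi S hf fj s(1) b(1)] f_qc[OF hi S hf fj t(1) b(1)] fFG by simp
  then have "((i x, i s), (i y, i t)) \<in> loc_rel (i ` S) b"
    by (rule eq_equiv_class[OF _ loc_rel_equiv[OF open_ideal_ideal[OF b(1)] mult_closed_image[OF hi S]]])
      (use t in auto)
  then obtain u where u: "u \<in> S" "i u * (i x * i t - i y * i s) \<in> b"
    by (auto simp: loc_rel_iff)
  have "i u * (i x * i t - i y * i s) = i (u * (x * t - y * s))"
  proof -
    have m: "\<And>p q. i (p * q) = i p * i q" and ad: "\<And>p q. i (p + q) = i p + i q"
      using hi by (auto simp: ring_hom_fun_def)
    have d: "i (p - q) = i p - i q" for p q
    proof -
      have "i (p - q) + i q = i p" using ad[of "p - q" q] by simp
      then show ?thesis by (simp add: eq_diff_eq)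
    qed
    show ?thesis by (simp add: m d)
  qed
  then have "i (u * (x * t - y * s)) \<in> b" using u(2) by simp
  then have "u * (x * t - y * s) \<in> a" using b(2) by blast
  then have "((x,s),(y,t)) \<in> loc_rel S a" using u s t by (auto simp: loc_rel_iff)
  then have "loc_rel S a `` {(x,s)} = loc_rel S a `` {(y,t)}"
    by (rule equiv_class_eq[OF loc_rel_equiv[OF open_ideal_ideal[OF a(1)] S]])
  then show False using a(2) Fx[of a] Gy[of a] by (simp add: K_def)
qed

end
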